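(* Let $F:\mathcal{P}(V,A)\to S_2(A)$ be an irreducible, weakly viable consular election rule satisfying SPP and SPO. If $\{a,b\}$ is an edge of the range graph $\mathcal{G}(F)$, then there exists $c\in A$ such that $\{a,c\}$ and $\{b,c\}$ are also edges of $\mathcal{G}(F)$ (so $a,b,c$ form a $3$-cycle).
   Context: $V$ is a finite nonempty set of voters, $A$ a finite set of alternatives; a profile $P$ assigns to each voter $i$ a linear order $P_i$ on $A$; $P_i'P_{-i}$ replaces voter $i$'s order by $P_i'$; $P|_B$ is the profile of restrictions to $B\subseteq A$. $S_2(A)$ is the set of 2-element subsets of $A$; a consular election rule is a map $F:\mathcal{P}(V,A)\to S_2(A)$. SPO: for all $P$, $i$, $P_i'$, $\mathrm{best}(P_i,F(P))\succeq_i\mathrm{best}(P_i,F(P_i'P_{-i}))$; SPP: same with $\mathrm{worst}$, where $\mathrm{best}(P_i,W)$, $\mathrm{worst}(P_i,W)$ are the $P_i$-best and $P_i$-worst elements of $W$. Weakly viable: every $a\in A$ lies in $F(P)$ for some $P$. $F$ is reducible if there is a partition $A=B\uplus C$ and social choice functions $G:\mathcal{P}(V,B)\to B$, $H:\mathcal{P}(V,C)\to C$ with $F(P)=\{G(P|_B),H(P|_C)\}$ for all $P$; irreducible means not reducible. The range graph $\mathcal{G}(F)$ has vertex set $A$ and edge set equal to the range of $F$. *)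

theory Defs
  imports Main
begin

text \<open>Convention: a preference of a voter is a linear order R on A (reflexive,
  as in linear_order_on); (x, y) \<in> R means the voter weakly prefers x to y.
  A profile on voters V and alternatives A assigns a linear order on A to each
  voter in V and the empty relation to every non-voter (extensionality).\<close>

definition profiles :: "'v set \<Rightarrow> 'a set \<Rightarrow> ('v \<Rightarrow> ('a \<times> 'a) set) set" where
  "profiles V A = {P. (\<forall>i\<in>V. linear_order_on A (P i)) \<and> (\<forall>i. i \<notin> V \<longrightarrow> P i = {})}"

definition restrict_profile :: "('v \<Rightarrow> ('a \<times> 'a) set) \<Rightarrow> 'a set \<Rightarrow> ('v \<Rightarrow> ('a \<times> 'a) set)" where
  "restrict_profile P B = (\<lambda>i. P i \<inter> (B \<times> B))"

definition S2 :: "'a set \<Rightarrow> 'a set set" where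
  "S2 A = {W. W \<subseteq> A \<and> card W = 2}"

definition best :: "('a \<times> 'a) set \<Rightarrow> 'a set \<Rightarrow> 'a" where
  "best R W = (THE b. b \<in> W \<and> (\<forall>x\<in>W. (b, x) \<in> R))"

definition worst :: "('a \<times> 'a) set \<Rightarrow> 'a set \<Rightarrow> 'a" where
  "worst R W = (THE w. w \<in> W \<and> (\<forall>x\<in>W. (x, w) \<in> R))"

definition consular_rule :: "'v set \<Rightarrow> 'a set \<Rightarrow> (('v \<Rightarrow> ('a \<times> 'a) set) \<Rightarrow> 'a set) \<Rightarrow> bool" where
  "consular_rule V A F = (\<forall>P\<in>profiles V A. F P \<in> S2 A)"

definition SPO :: "'v set \<Rightarrow> 'a set \<Rightarrow> (('v \<Rightarrow> ('a \<times> 'a) set) \<Rightarrow> 'a set) \<Rightarrow> bool" where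
  "SPO V A F = (\<forall>P\<in>profiles V A. \<forall>i\<in>V. \<forall>Q. linear_order_on A Q \<longrightarrow>
      (best (P i) (F P), best (P i) (F (P(i := Q)))) \<in> P i)"

definition SPP :: "'v set \<Rightarrow> 'a set \<Rightarrow> (('v \<Rightarrow> ('a \<times> 'a) set) \<Rightarrow> 'a set) \<Rightarrow> bool" where
  "SPP V A F = (\<forall>P\<in>profiles V A. \<forall>i\<in>V. \<forall>Q. linear_order_on A Q \<longrightarrow>
      (worst (P i) (F P), worst (P i) (F (P(i := Q)))) \<in> P i)"

definition weakly_viable :: "'v set \<Rightarrow> 'a set \<Rightarrow> (('v \<Rightarrow> ('a \<times> 'a) set) \<Rightarrow> 'a set) \<Rightarrow> bool" where
  "weakly_viable V A F = (\<forall>a\<in>A. \<exists>P\<in>profiles V A. a \<in> F P)"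

definition reducible :: "'v set \<Rightarrow> 'a set \<Rightarrow> (('v \<Rightarrow> ('a \<times> 'a) set) \<Rightarrow> 'a set) \<Rightarrow> bool" where
  "reducible V A F = (\<exists>B C (G :: ('v \<Rightarrow> ('a \<times> 'a) set) \<Rightarrow> 'a) (H :: ('v \<Rightarrow> ('a \<times> 'a) set) \<Rightarrow> 'a).
      B \<union> C = A \<and> B \<inter> C = {} \<and>
      (\<forall>P\<in>profiles V B. G P \<in> B) \<and> (\<forall>P\<in>profiles V C. H P \<in> C) \<and>
      (\<forall>P\<in>profiles V A. F P = {G (restrict_profile P B), H (restrict_profile P C)}))"

definition irreducible :: "'v set \<Rightarrow> 'a set \<Rightarrow> (('v \<Rightarrow> ('a \<times> 'a) set) \<Rightarrow> 'a set) \<Rightarrow> bool" where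
  "irreducible V A F = (\<not> reducible V A F)"

definition range_edges :: "'v set \<Rightarrow> 'a set \<Rightarrow> (('v \<Rightarrow> ('a \<times> 'a) set) \<Rightarrow> 'a set) \<Rightarrow> 'a set set" where
  "range_edges V A F = F ` profiles V A"

end

theory Submission
  imports Defs
begin

lemma lo_sub: "linear_order_on A L \<Longrightarrow> (p,q) \<in> L \<Longrightarrow> p \<in> A \<and> q \<in> A"
  unfolding order_on_defs by blast
lemma lo_refl: "linear_order_on A L \<Longrightarrow> p \<in> A \<Longrightarrow> (p,p) \<in> L"
  unfolding order_on_defs refl_on_def by blast
lemma lo_trans: "linear_order_on A L \<Longrightarrow> (p,q) \<in> L \<Longrightarrow> (q,r) \<in> L \<Longrightarrow> (p,r) \<in> L"
  unfolding order_on_defs trans_def by blast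
lemma lo_antisym: "linear_order_on A L \<Longrightarrow> (p,q) \<in> L \<Longrightarrow> (q,p) \<in> L \<Longrightarrow> p = q"
  unfolding order_on_defs antisym_def by blast
lemma lo_total: assumes "linear_order_on A L" "p \<in> A" "q \<in> A" shows "(p,q) \<in> L \<or> (q,p) \<in> L"
proof (cases "p = q")
  case True then show ?thesis using lo_refl[OF assms(1,2)] by simp
next
  case False then show ?thesis using assms unfolding linear_order_on_def total_on_def by blast
qed

lemma best_eq: "linear_order_on A L \<Longrightarrow> b \<in> W \<Longrightarrow> \<forall>x\<in>W. (b,x) \<in> L \<Longrightarrow> best L W = b"
  unfolding best_def by (rule the_equality) (auto dest: lo_antisym)
lemma worst_eq: "linear_order_on A L \<Longrightarrow> b \<in> W \<Longrightarrow> \<forall>x\<in>W. (x,b) \<in> L \<Longrightarrow> worst L W = b"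
  unfolding worst_def by (rule the_equality) (auto dest: lo_antisym)

lemma best2: "linear_order_on A L \<Longrightarrow> p \<in> A \<Longrightarrow> q \<in> A \<Longrightarrow>
   best L {p,q} = (if (p,q) \<in> L then p else q)"
proof (cases "(p,q) \<in> L")
  case True
  assume "linear_order_on A L" "p \<in> A" "q \<in> A"
  then show ?thesis using True by (simp add: best_eq lo_refl)
next
  case False
  assume l: "linear_order_on A L" "p \<in> A" "q \<in> A"
  then have "(q,p) \<in> L" using False lo_total[OF l] by blast
  then show ?thesis using False l by (simp add: best_eq lo_refl)
qed

lemma worst2: "linear_order_on A L \<Longrightarrow> p \<in> A \<Longrightarrow> q \<in> A \<Longrightarrow>
   worst L {p,q} = (if (p,q) \<in> L then q else p)"
proof (cases "(p,q) \<in> L")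
  case True
  assume "linear_order_on A L" "p \<in> A" "q \<in> A"
  then show ?thesis using True by (simp add: worst_eq lo_refl)
next
  case False
  assume l: "linear_order_on A L" "p \<in> A" "q \<in> A"
  then have "(q,p) \<in> L" using False lo_total[OF l] by blast
  then show ?thesis using False l by (simp add: worst_eq lo_refl)
qed

lemma best_mem: "linear_order_on A L \<Longrightarrow> p \<in> A \<Longrightarrow> q \<in> A \<Longrightarrow>
   best L {p,q} \<in> {p,q} \<and> (best L {p,q}, p) \<in> L \<and> (best L {p,q}, q) \<in> L"
  using lo_total[of A L p q] by (auto simp: best2 lo_refl)

lemma worst_mem: "linear_order_on A L \<Longrightarrow> p \<in> A \<Longrightarrow> q \<in> A \<Longrightarrow>
   worst L {p,q} \<in> {p,q} \<and> (p, worst L {p,q}) \<in> L \<and> (q, worst L {p,q}) \<in> L"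
  using lo_total[of A L p q] by (auto simp: worst2 lo_refl)

definition keyord :: "'a set \<Rightarrow> ('a \<Rightarrow> nat) \<Rightarrow> ('a \<times> 'a) set \<Rightarrow> ('a \<times> 'a) set" where
  "keyord A f L = {(p,q). p \<in> A \<and> q \<in> A \<and> (f p < f q \<or> (f p = f q \<and> (p,q) \<in> L))}"

lemma keyord_lo: assumes lo: "linear_order_on A L" shows "linear_order_on A (keyord A f L)"
  unfolding linear_order_on_def partial_order_on_def preorder_on_def
proof (intro conjI)
  show "keyord A f L \<subseteq> A \<times> A" unfolding keyord_def by auto
  show "refl_on A (keyord A f L)" unfolding keyord_def refl_on_def using lo_refl[OF lo] by auto
  show "trans (keyord A f L)" unfolding trans_def
  proof (intro allI impI)
    fix p q r assume pq: "(p,q) \<in> keyord A f L" and qr: "(q,r) \<in> keyord A f L"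
    show "(p,r) \<in> keyord A f L"
      using pq qr lo_trans[OF lo, of p q r] unfolding keyord_def by auto
  qed
  show "antisym (keyord A f L)" unfolding antisym_def
  proof (intro allI impI)
    fix p q assume pq: "(p,q) \<in> keyord A f L" and qp: "(q,p) \<in> keyord A f L"
    show "p = q" using pq qp lo_antisym[OF lo, of p q] unfolding keyord_def by auto
  qed
  show "total_on A (keyord A f L)" unfolding total_on_def
  proof (intro ballI impI)
    fix p q assume p: "p \<in> A" and q: "q \<in> A"
    have t: "(p,q) \<in> L \<or> (q,p) \<in> L" by (rule lo_total[OF lo p q])
    consider "f p < f q" | "f q < f p" | "f p = f q" by linarith
    then show "(p,q) \<in> keyord A f L \<or> (q,p) \<in> keyord A f L"
      using p q t unfolding keyord_def by cases auto
  qed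
qed

lemma dom_eq:
  assumes lo: "linear_order_on A L" and A: "b \<in> A" "c \<in> A" "b' \<in> A" "c' \<in> A"
    and ne: "b \<noteq> c" "b' \<noteq> c'" and d1: "(b',b) \<in> L" and d2: "(c',c) \<in> L"
    and s1: "(best L {b,c}, best L {b',c'}) \<in> L" and s2: "(worst L {b,c}, worst L {b',c'}) \<in> L"
  shows "{b,c} = {b',c'}"
proof -
  note tr = lo_trans[OF lo] and an = lo_antisym[OF lo] and to = lo_total[OF lo]
  have s1': "(if (b,c) \<in> L then b else c, if (b',c') \<in> L then b' else c') \<in> L"
    using s1 unfolding best2[OF lo A(1,2)] best2[OF lo A(3,4)] .
  have s2': "(if (b,c) \<in> L then c else b, if (b',c') \<in> L then c' else b') \<in> L"
    using s2 unfolding worst2[OF lo A(1,2)] worst2[OF lo A(3,4)] .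
  show ?thesis
  proof (cases "(b,c) \<in> L")
    case T1: True
    show ?thesis
    proof (cases "(b',c') \<in> L")
      case True
      then have "(b,b') \<in> L" "(c,c') \<in> L" using T1 s1' s2' by simp_all
      then have "b = b'" "c = c'" using d1 d2 an by blast+
      then show ?thesis by simp
    next
      case False
      then have "(c,b') \<in> L" using T1 s2' by simp
      then have "(c,b) \<in> L" using d1 tr by blast
      then have "b = c" using T1 an by blast
      then show ?thesis using ne by simp
    qed
  next
    case F1: False
    show ?thesis
    proof (cases "(b',c') \<in> L")
      case True
      then have "(b,c') \<in> L" using F1 s2' by simp
      then have "(b,c) \<in> L" using d2 tr by blast
      then show ?thesis using F1 by simp
    next
      case False
      then have "(c,c') \<in> L" "(b,b') \<in> L" using F1 s1' s2' by simp_all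
      then have "b = b'" "c = c'" using d1 d2 an by blast+
      then show ?thesis by simp
    qed
  qed
qed

lemma ex_lo: "finite A \<Longrightarrow> \<exists>L. linear_order_on A L"
proof -
  assume "finite A"
  then obtain f :: "'a \<Rightarrow> nat" and n where inj: "inj_on f A" using finite_imp_inj_to_nat_seg by blast
  have "linear_order_on A {(p,q). p \<in> A \<and> q \<in> A \<and> f p \<le> f q}"
    unfolding order_on_defs refl_on_def trans_def antisym_def total_on_def
    using inj by (auto dest: inj_onD)
  then show ?thesis by blast
qed


lemma prof_lo: "P \<in> profiles V A \<Longrightarrow> i \<in> V \<Longrightarrow> linear_order_on A (P i)"
  unfolding profiles_def by auto

lemma prof_upd: "P \<in> profiles V A \<Longrightarrow> i \<in> V \<Longrightarrow> linear_order_on A Q \<Longrightarrow> P(i := Q) \<in> profiles V A"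
  unfolding profiles_def by auto

lemma prof_const: "linear_order_on A R \<Longrightarrow> (\<lambda>i. if i \<in> V then R else {}) \<in> profiles V A"
  unfolding profiles_def by auto

lemma path:
  assumes fV: "finite V" and P0: "P0 \<in> profiles V A" and P1: "P1 \<in> profiles V A"
    and start: "\<Phi> (F P0)"
    and step: "\<And>P i. P \<in> profiles V A \<Longrightarrow> i \<in> V \<Longrightarrow> (\<forall>j. P j = P0 j \<or> P j = P1 j)
        \<Longrightarrow> \<Phi> (F P) \<Longrightarrow> \<Phi> (F (P(i := P1 i)))"
  shows "\<Phi> (F P1)"
proof -
  have main: "S \<subseteq> V \<Longrightarrow> \<Phi> (F (\<lambda>j. if j \<in> S then P1 j else P0 j))" if "finite S" for S
    using that
  proof (induction S rule: finite_induct)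
    case empty
    then show ?case using start by simp
  next
    case (insert i S)
    let ?H = "\<lambda>j. if j \<in> S then P1 j else P0 j"
    have H: "?H \<in> profiles V A" using P0 P1 unfolding profiles_def by auto
    have eq: "(\<lambda>j. if j \<in> insert i S then P1 j else P0 j) = ?H(i := P1 i)" by (rule ext) auto
    have "\<Phi> (F ?H)" using insert by auto
    then show ?case unfolding eq using step[OF H] insert by auto
  qed
  have "\<And>j. j \<notin> V \<Longrightarrow> P0 j = P1 j" using P0 P1 unfolding profiles_def by auto
  then have "(\<lambda>j. if j \<in> V then P1 j else P0 j) = P1" by (intro ext) simp
  then show ?thesis using main[OF fV] by simp
qed

definition pick :: "'v set \<Rightarrow> 'a set \<Rightarrow> (('v \<Rightarrow> ('a \<times> 'a) set) \<Rightarrow> 'a set) \<Rightarrow> 'a set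
   \<Rightarrow> ('v \<Rightarrow> ('a \<times> 'a) set) \<Rightarrow> 'a" where
  "pick V A F X Q = (SOME \<beta>. \<beta> \<in> X \<and> ((\<exists>P\<in>profiles V A. restrict_profile P X = Q) \<longrightarrow>
      (\<exists>P\<in>profiles V A. restrict_profile P X = Q \<and> \<beta> \<in> F P)))"

lemma pick:
  assumes "x0 \<in> X" and "\<forall>P\<in>profiles V A. F P \<inter> X \<noteq> {}"
  shows "pick V A F X Q \<in> X \<and> ((\<exists>P\<in>profiles V A. restrict_profile P X = Q) \<longrightarrow>
      (\<exists>P\<in>profiles V A. restrict_profile P X = Q \<and> pick V A F X Q \<in> F P))"
  unfolding pick_def
proof (rule someI_ex)
  show "\<exists>\<beta>. \<beta> \<in> X \<and> ((\<exists>P\<in>profiles V A. restrict_profile P X = Q) \<longrightarrow>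
      (\<exists>P\<in>profiles V A. restrict_profile P X = Q \<and> \<beta> \<in> F P))"
  proof (cases "\<exists>P\<in>profiles V A. restrict_profile P X = Q")
    case True
    then obtain P where "P \<in> profiles V A" "restrict_profile P X = Q" by blast
    moreover then obtain \<beta> where "\<beta> \<in> F P \<inter> X" using assms by blast
    ultimately show ?thesis by blast
  next
    case False
    then show ?thesis using assms by blast
  qed
qed

definition blk :: "'a set \<Rightarrow> 'a set \<Rightarrow> ('a \<times> 'a) set \<Rightarrow> ('a \<times> 'a) set" where
  "blk A X L = keyord A (\<lambda>p. if p \<in> X then 0 else 1) L"

lemma blk_lo: "linear_order_on A L \<Longrightarrow> linear_order_on A (blk A X L)"
  unfolding blk_def by (rule keyord_lo)

lemma blk_top: "p \<in> X \<Longrightarrow> q \<notin> X \<Longrightarrow> p \<in> A \<Longrightarrow> q \<in> A \<Longrightarrow> (p,q) \<in> blk A X L"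
  unfolding blk_def keyord_def by auto

lemma blk_in: "p \<in> X \<Longrightarrow> q \<in> X \<Longrightarrow> p \<in> A \<Longrightarrow> q \<in> A \<Longrightarrow> (p,q) \<in> blk A X L \<longleftrightarrow> (p,q) \<in> L"
  unfolding blk_def keyord_def by auto

lemma blk_out: "p \<notin> X \<Longrightarrow> q \<notin> X \<Longrightarrow> p \<in> A \<Longrightarrow> q \<in> A \<Longrightarrow> (p,q) \<in> blk A X L \<longleftrightarrow> (p,q) \<in> L"
  unfolding blk_def keyord_def by auto

 locale crule =
  fixes V :: "'v set" and A :: "'a set" and F :: "('v \<Rightarrow> ('a \<times> 'a) set) \<Rightarrow> 'a set"
  assumes fV: "finite V" and fA: "finite A" and cons: "consular_rule V A F"
    and spo: "SPO V A F" and spp: "SPP V A F"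

context crule
begin

lemma Fpair: assumes P: "P \<in> profiles V A" shows "\<exists>p q. F P = {p,q} \<and> p \<noteq> q \<and> p \<in> A \<and> q \<in> A"
proof -
  have s: "F P \<subseteq> A" "card (F P) = 2" using cons P unfolding consular_rule_def S2_def by auto
  then obtain x y where "F P = {x,y}" "x \<noteq> y" by (meson card_2_iff)
  then show ?thesis using s(1) by blast
qed

lemma spoD: "P \<in> profiles V A \<Longrightarrow> i \<in> V \<Longrightarrow> linear_order_on A Q \<Longrightarrow>
   (best (P i) (F P), best (P i) (F (P(i := Q)))) \<in> P i"
  using spo unfolding SPO_def by blast

lemma sppD: "P \<in> profiles V A \<Longrightarrow> i \<in> V \<Longrightarrow> linear_order_on A Q \<Longrightarrow>
   (worst (P i) (F P), worst (P i) (F (P(i := Q)))) \<in> P i"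
  using spp unfolding SPP_def by blast

lemma top_in:
  assumes P0: "P0 \<in> profiles V A" and x0: "x \<in> F P0" and P1: "P1 \<in> profiles V A"
    and top: "\<forall>i\<in>V. \<forall>y\<in>A. (x,y) \<in> P1 i"
  shows "x \<in> F P1"
proof (rule path[OF fV P0 P1, where \<Phi> = "\<lambda>W. x \<in> W"])
  show "x \<in> F P0" by fact
next
  fix P i assume P: "P \<in> profiles V A" and i: "i \<in> V" and xP: "x \<in> F P"
  define R where "R = P1 i"
  have R: "linear_order_on A R" using prof_lo[OF P1 i] R_def by simp
  define P' where "P' = P(i := R)"
  have P': "P' \<in> profiles V A" using prof_upd[OF P i R] P'_def by simp
  have bk: "P'(i := P i) = P" unfolding P'_def by simp
  have "(best (P' i) (F P'), best (P' i) (F (P'(i := P i)))) \<in> P' i"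
    using spoD[OF P' i prof_lo[OF P i]] .
  then have 1: "(best R (F P'), best R (F P)) \<in> R" unfolding bk by (simp add: P'_def)
  obtain p q where pq: "F P = {p,q}" "p \<noteq> q" "p \<in> A" "q \<in> A" using Fpair[OF P] by blast
  have "best R (F P) = x" using xP top i pq R_def by (intro best_eq[OF R]) auto
  with 1 have 2: "(best R (F P'), x) \<in> R" by simp
  obtain p' q' where pq': "F P' = {p',q'}" "p' \<noteq> q'" "p' \<in> A" "q' \<in> A" using Fpair[OF P'] by blast
  have bm: "best R (F P') \<in> F P'" using best_mem[OF R pq'(3,4)] pq' by auto
  then have "best R (F P') \<in> A" using pq' by auto
  then have "(x, best R (F P')) \<in> R" using top i R_def by auto
  then have "best R (F P') = x" using 2 lo_antisym[OF R] by blast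
  then show "x \<in> F (P(i := P1 i))" using bm P'_def R_def by simp
qed

end

context crule
begin

lemma adj:
  assumes wv: "weakly_viable V A F" and P0: "P0 \<in> profiles V A" and e: "F P0 = {u,v}"
    and x: "x \<in> A" "x \<noteq> u" "x \<noteq> v"
  shows "\<exists>P\<in>profiles V A. F P = {x,u} \<or> F P = {x,v}"
proof -
  have uv: "u \<in> A" "v \<in> A" "u \<noteq> v" using Fpair[OF P0] e by (auto simp: doubleton_eq_iff)
  obtain L0 where L0: "linear_order_on A L0" using ex_lo[OF fA] by blast
  define f where "f = (\<lambda>y. if y = x then 0 else if y = u then 1 else if y = v then (2::nat) else 3)"
  define R where "R = keyord A f L0"
  have R: "linear_order_on A R" unfolding R_def by (rule keyord_lo[OF L0])
  define P1 where "P1 = (\<lambda>i. if i \<in> V then R else {})"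
  have P1: "P1 \<in> profiles V A" unfolding P1_def by (rule prof_const[OF R])
  have low: "\<And>y. (y,v) \<in> R \<Longrightarrow> y \<in> {x,u,v}"
    unfolding R_def keyord_def f_def using x uv by (auto split: if_splits)
  have up: "\<And>y. y \<in> {x,u,v} \<Longrightarrow> (y,v) \<in> R"
    unfolding R_def keyord_def f_def using x uv lo_refl[OF L0] by auto
  have sub: "F P1 \<subseteq> {x,u,v}"
  proof (rule path[OF fV P0 P1, where \<Phi>="\<lambda>W. W \<subseteq> {x,u,v}"])
    show "F P0 \<subseteq> {x,u,v}" using e by auto
  next
    fix P i assume P: "P \<in> profiles V A" and i: "i \<in> V" and sP: "F P \<subseteq> {x,u,v}"
    have P1i: "P1 i = R" using i P1_def by simp
    define P' where "P' = P(i := R)"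
    have P': "P' \<in> profiles V A" using prof_upd[OF P i R] P'_def by simp
    have bk: "P'(i := P i) = P" unfolding P'_def by simp
    have "(worst (P' i) (F P'), worst (P' i) (F (P'(i := P i)))) \<in> P' i"
      using sppD[OF P' i prof_lo[OF P i]] .
    then have 1: "(worst R (F P'), worst R (F P)) \<in> R" unfolding bk by (simp add: P'_def)
    obtain p q where pq: "F P = {p,q}" "p \<noteq> q" "p \<in> A" "q \<in> A" using Fpair[OF P] by blast
    have "worst R (F P) \<in> F P" using worst_mem[OF R pq(3,4)] pq by auto
    then have "(worst R (F P), v) \<in> R" using sP up by blast
    with 1 have 2: "(worst R (F P'), v) \<in> R" using lo_trans[OF R] by blast
    obtain p' q' where pq': "F P' = {p',q'}" "p' \<noteq> q'" "p' \<in> A" "q' \<in> A" using Fpair[OF P'] by blast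
    have "\<forall>y\<in>F P'. (y, worst R (F P')) \<in> R" using worst_mem[OF R pq'(3,4)] pq' by auto
    then have "\<forall>y\<in>F P'. y \<in> {x,u,v}" using 2 lo_trans[OF R] low by blast
    then show "F (P(i := P1 i)) \<subseteq> {x,u,v}" using P1i P'_def by auto
  qed
  obtain P' where P': "P' \<in> profiles V A" "x \<in> F P'" using wv x unfolding weakly_viable_def by blast
  have "\<forall>i\<in>V. \<forall>y\<in>A. (x,y) \<in> P1 i"
    unfolding P1_def R_def keyord_def f_def using lo_refl[OF L0] x by auto
  then have xin: "x \<in> F P1" using top_in[OF P'(1) P'(2) P1] by blast
  obtain p q where pq: "F P1 = {p,q}" "p \<noteq> q" using Fpair[OF P1] by blast
  have "F P1 = {x,u} \<or> F P1 = {x,v}" using pq sub xin uv x by auto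
  then show ?thesis using P1 by blast
qed

lemma blk_same:
  assumes XY: "X \<union> Y = A" "X \<inter> Y = {}"
    and bip: "\<forall>P\<in>profiles V A. \<exists>\<beta> \<gamma>. F P = {\<beta>,\<gamma>} \<and> \<beta> \<in> X \<and> \<gamma> \<in> Y"
    and P: "P \<in> profiles V A" and i: "i \<in> V"
  shows "F (P(i := blk A X (P i))) = F P"
proof -
  define L where "L = P i"
  have L: "linear_order_on A L" using prof_lo[OF P i] L_def by simp
  define R where "R = blk A X L"
  have R: "linear_order_on A R" unfolding R_def by (rule blk_lo[OF L])
  define P' where "P' = P(i := R)"
  have P': "P' \<in> profiles V A" using prof_upd[OF P i R] P'_def by simp
  have bk: "P'(i := L) = P" unfolding P'_def L_def by simp
  obtain b c where bc: "F P = {b,c}" "b \<in> X" "c \<in> Y" using bip P by blast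
  obtain b' c' where bc': "F P' = {b',c'}" "b' \<in> X" "c' \<in> Y" using bip P' by blast
  have inA: "b \<in> A" "c \<in> A" "b' \<in> A" "c' \<in> A" "c \<notin> X" "c' \<notin> X"
    using XY bc bc' by auto
  have ne: "b \<noteq> c" "b' \<noteq> c'" using inA bc bc' by auto
  have b1: "best R {b',c'} = b'" using inA bc'
    by (intro best_eq[OF R]) (auto simp: R_def intro: blk_top lo_refl[OF blk_lo[OF L]])
  have b2: "best R {b,c} = b" using inA bc
    by (intro best_eq[OF R]) (auto simp: R_def intro: blk_top lo_refl[OF blk_lo[OF L]])
  have w1: "worst R {b',c'} = c'" using inA bc'
    by (intro worst_eq[OF R]) (auto simp: R_def intro: blk_top lo_refl[OF blk_lo[OF L]])
  have w2: "worst R {b,c} = c" using inA bc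
    by (intro worst_eq[OF R]) (auto simp: R_def intro: blk_top lo_refl[OF blk_lo[OF L]])
  have "(best (P' i) (F P'), best (P' i) (F (P'(i := L)))) \<in> P' i"
    using spoD[OF P' i L] .
  then have "(b',b) \<in> R" using bc bc' b1 b2 bk by (simp add: P'_def)
  then have d1: "(b',b) \<in> L" unfolding R_def using blk_in[OF bc'(2) bc(2) inA(3) inA(1), of L] by simp
  have "(worst (P' i) (F P'), worst (P' i) (F (P'(i := L)))) \<in> P' i"
    using sppD[OF P' i L] .
  then have "(c',c) \<in> R" using bc bc' w1 w2 bk by (simp add: P'_def)
  then have d2: "(c',c) \<in> L" unfolding R_def using blk_out[OF inA(6) inA(5) inA(4) inA(2), of L] by simp
  have s1: "(best L {b,c}, best L {b',c'}) \<in> L"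
    using spoD[OF P i R] bc bc' P'_def L_def by simp
  have s2: "(worst L {b,c}, worst L {b',c'}) \<in> L"
    using sppD[OF P i R] bc bc' P'_def L_def by simp
  have "{b,c} = {b',c'}" by (rule dom_eq[OF L inA(1-4) ne d1 d2 s1 s2])
  then show ?thesis using bc bc' P'_def R_def L_def by simp
qed

lemma blk_swap:
  assumes XY: "X \<union> Y = A" "X \<inter> Y = {}"
    and bip: "\<forall>P\<in>profiles V A. \<exists>\<beta> \<gamma>. F P = {\<beta>,\<gamma>} \<and> \<beta> \<in> X \<and> \<gamma> \<in> Y"
    and P: "P \<in> profiles V A" and i: "i \<in> V"
    and R1: "linear_order_on A R1" and R2: "linear_order_on A R2"
    and t1: "\<forall>p\<in>X. \<forall>q\<in>Y. (p,q) \<in> R1" and t2: "\<forall>p\<in>X. \<forall>q\<in>Y. (p,q) \<in> R2"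
    and agree: "\<forall>p\<in>X. \<forall>q\<in>X. (p,q) \<in> R1 \<longleftrightarrow> (p,q) \<in> R2"
  shows "F (P(i := R1)) \<inter> X = F (P(i := R2)) \<inter> X"
proof -
  define P1 where "P1 = P(i := R1)"
  define P2 where "P2 = P(i := R2)"
  have P1: "P1 \<in> profiles V A" using prof_upd[OF P i R1] P1_def by simp
  have P2: "P2 \<in> profiles V A" using prof_upd[OF P i R2] P2_def by simp
  have e12: "P1(i := R2) = P2" "P2(i := R1) = P1" unfolding P1_def P2_def by simp_all
  obtain b1 c1 where bc1: "F P1 = {b1,c1}" "b1 \<in> X" "c1 \<in> Y" using bip P1 by blast
  obtain b2 c2 where bc2: "F P2 = {b2,c2}" "b2 \<in> X" "c2 \<in> Y" using bip P2 by blast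
  have inA: "b1 \<in> A" "c1 \<in> A" "b2 \<in> A" "c2 \<in> A" using XY bc1 bc2 by auto
  have x1: "best R1 {b1,c1} = b1" using inA bc1 t1 by (intro best_eq[OF R1]) (auto intro: lo_refl[OF R1])
  have x2: "best R1 {b2,c2} = b2" using inA bc2 t1 by (intro best_eq[OF R1]) (auto intro: lo_refl[OF R1])
  have x3: "best R2 {b1,c1} = b1" using inA bc1 t2 by (intro best_eq[OF R2]) (auto intro: lo_refl[OF R2])
  have x4: "best R2 {b2,c2} = b2" using inA bc2 t2 by (intro best_eq[OF R2]) (auto intro: lo_refl[OF R2])
  have "(b1,b2) \<in> R1" using spoD[OF P1 i R2] e12 bc1 bc2 x1 x2 by (simp add: P1_def)
  moreover have "(b2,b1) \<in> R2" using spoD[OF P2 i R1] e12 bc1 bc2 x3 x4 by (simp add: P2_def)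
  then have "(b2,b1) \<in> R1" using agree bc1 bc2 by blast
  ultimately have "b1 = b2" using lo_antisym[OF R1] by blast
  moreover have "F P1 \<inter> X = {b1}" "F P2 \<inter> X = {b2}" using bc1 bc2 XY by auto
  ultimately show ?thesis using P1_def P2_def by simp
qed

lemma indep1:
  assumes XY: "X \<union> Y = A" "X \<inter> Y = {}"
    and bip: "\<forall>P\<in>profiles V A. \<exists>\<beta> \<gamma>. F P = {\<beta>,\<gamma>} \<and> \<beta> \<in> X \<and> \<gamma> \<in> Y"
    and P: "P \<in> profiles V A" and i: "i \<in> V"
    and Q: "linear_order_on A Q" and agr: "Q \<inter> (X \<times> X) = P i \<inter> (X \<times> X)"
  shows "F (P(i := Q)) \<inter> X = F P \<inter> X"
proof -
  define R1 where "R1 = blk A X (P i)"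
  define R2 where "R2 = blk A X Q"
  have PQ: "P(i := Q) \<in> profiles V A" by (rule prof_upd[OF P i Q])
  have e1: "F (P(i := R1)) = F P" unfolding R1_def by (rule blk_same[OF XY bip P i])
  have "F ((P(i := Q))(i := blk A X ((P(i := Q)) i))) = F (P(i := Q))"
    by (rule blk_same[OF XY bip PQ i])
  then have e2: "F (P(i := R2)) = F (P(i := Q))" by (simp add: R2_def)
  have r1: "linear_order_on A R1" unfolding R1_def by (rule blk_lo[OF prof_lo[OF P i]])
  have r2: "linear_order_on A R2" unfolding R2_def by (rule blk_lo[OF Q])
  have t1: "\<forall>p\<in>X. \<forall>q\<in>Y. (p,q) \<in> R1" unfolding R1_def using XY by (auto intro: blk_top)
  have t2: "\<forall>p\<in>X. \<forall>q\<in>Y. (p,q) \<in> R2" unfolding R2_def using XY by (auto intro: blk_top)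
  have ag: "\<forall>p\<in>X. \<forall>q\<in>X. (p,q) \<in> R1 \<longleftrightarrow> (p,q) \<in> R2"
  proof (intro ballI)
    fix p q assume "p \<in> X" "q \<in> X"
    moreover then have "p \<in> A" "q \<in> A" using XY by auto
    moreover have "(p,q) \<in> Q \<longleftrightarrow> (p,q) \<in> P i" using agr \<open>p \<in> X\<close> \<open>q \<in> X\<close> by blast
    ultimately show "(p,q) \<in> R1 \<longleftrightarrow> (p,q) \<in> R2" unfolding R1_def R2_def by (simp add: blk_in)
  qed
  have "F (P(i := R1)) \<inter> X = F (P(i := R2)) \<inter> X"
    by (rule blk_swap[OF XY bip P i r1 r2 t1 t2 ag])
  then show ?thesis using e1 e2 by simp
qed

lemma indep:
  assumes XY: "X \<union> Y = A" "X \<inter> Y = {}"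
    and bip: "\<forall>P\<in>profiles V A. \<exists>\<beta> \<gamma>. F P = {\<beta>,\<gamma>} \<and> \<beta> \<in> X \<and> \<gamma> \<in> Y"
    and P: "P \<in> profiles V A" and P': "P' \<in> profiles V A"
    and r: "restrict_profile P X = restrict_profile P' X"
  shows "F P' \<inter> X = F P \<inter> X"
proof (rule path[OF fV P P', where \<Phi>="\<lambda>W. W \<inter> X = F P \<inter> X"])
  show "F P \<inter> X = F P \<inter> X" ..
next
  fix H i assume H: "H \<in> profiles V A" and i: "i \<in> V" and hj: "\<forall>j. H j = P j \<or> H j = P' j"
    and hp: "F H \<inter> X = F P \<inter> X"
  have "P i \<inter> (X \<times> X) = P' i \<inter> (X \<times> X)" using fun_cong[OF r, of i] unfolding restrict_profile_def .
  then have "P' i \<inter> (X \<times> X) = H i \<inter> (X \<times> X)" using hj by metis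
  then have "F (H(i := P' i)) \<inter> X = F H \<inter> X" by (rule indep1[OF XY bip H i prof_lo[OF P' i]])
  then show "F (H(i := P' i)) \<inter> X = F P \<inter> X" using hp by simp
qed

end

context crule
begin

lemma adj':
  assumes wv: "weakly_viable V A F" and e: "{u,v} \<in> F ` profiles V A"
    and x: "x \<in> A" "x \<noteq> u" "x \<noteq> v"
  shows "{x,u} \<in> F ` profiles V A \<or> {x,v} \<in> F ` profiles V A"
proof -
  obtain P0 where "P0 \<in> profiles V A" "F P0 = {u,v}" using e by auto
  from adj[OF wv this x] show ?thesis by (metis image_eqI)
qed

lemma bip_struct:
  assumes wv: "weakly_viable V A F" and P0: "P0 \<in> profiles V A" and e: "F P0 = {a,b}"
    and notri: "\<not> (\<exists>c\<in>A. {a,c} \<in> F ` profiles V A \<and> {b,c} \<in> F ` profiles V A)"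
  shows "\<forall>P\<in>profiles V A. \<exists>\<beta> \<gamma>. F P = {\<beta>,\<gamma>} \<and> \<beta> \<in> A - {x\<in>A. {a,x} \<in> F ` profiles V A}
           \<and> \<gamma> \<in> {x\<in>A. {a,x} \<in> F ` profiles V A}"
    and "a \<in> A - {x\<in>A. {a,x} \<in> F ` profiles V A}"
    and "b \<in> {x\<in>A. {a,x} \<in> F ` profiles V A}"
proof -
  let ?E = "F ` profiles V A"
  let ?Y = "{x\<in>A. {a,x} \<in> ?E}"
  have ab: "a \<in> A" "b \<in> A" "a \<noteq> b" using Fpair[OF P0] e by (auto simp: doubleton_eq_iff)
  have eab: "{a,b} \<in> ?E" using P0 e by (metis image_eqI)
  have nosing: "\<And>z. {z} \<notin> ?E"
  proof
    fix z assume "{z} \<in> ?E"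
    then obtain P where "P \<in> profiles V A" "F P = {z}" by auto
    then show False using Fpair by (metis doubleton_eq_iff insert_not_empty singleton_insert_inj_eq)
  qed
  show "b \<in> ?Y" using ab eab by auto
  show "a \<in> A - ?Y" using ab nosing by auto
  show "\<forall>P\<in>profiles V A. \<exists>\<beta> \<gamma>. F P = {\<beta>,\<gamma>} \<and> \<beta> \<in> A - ?Y \<and> \<gamma> \<in> ?Y"
  proof
    fix P assume P: "P \<in> profiles V A"
    obtain p q where pq: "F P = {p,q}" "p \<noteq> q" "p \<in> A" "q \<in> A" using Fpair[OF P] by blast
    have epq: "{p,q} \<in> ?E" using P pq by (metis image_eqI)
    have c1: "\<not> (p \<in> ?Y \<and> q \<in> ?Y)"
    proof
      assume h: "p \<in> ?Y \<and> q \<in> ?Y"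
      show False
      proof (cases "b = p \<or> b = q")
        case True
        then show ?thesis using h epq notri pq by (auto simp: insert_commute)
      next
        case False
        then have "{b,p} \<in> ?E \<or> {b,q} \<in> ?E" using adj'[OF wv epq ab(2)] by auto
        then show ?thesis using h notri pq by auto
      qed
    qed
    have c2: "\<not> (p \<notin> ?Y \<and> q \<notin> ?Y)"
    proof
      assume h: "p \<notin> ?Y \<and> q \<notin> ?Y"
      show False
      proof (cases "a = p \<or> a = q")
        case True
        then show ?thesis using h epq pq by (auto simp: insert_commute)
      next
        case False
        then have "{a,p} \<in> ?E \<or> {a,q} \<in> ?E" using adj'[OF wv epq ab(1)] by auto
        then show ?thesis using h pq by auto
      qed
    qed
    show "\<exists>\<beta> \<gamma>. F P = {\<beta>,\<gamma>} \<and> \<beta> \<in> A - ?Y \<and> \<gamma> \<in> ?Y"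
    proof (cases "p \<in> ?Y")
      case True
      then have "q \<in> A - ?Y" using c1 pq by auto
      moreover have "F P = {q,p}" using pq by (simp add: insert_commute)
      ultimately show ?thesis using True by blast
    next
      case False
      then have "q \<in> ?Y" using c2 by auto
      then show ?thesis using False pq by blast
    qed
  qed
qed

end

theorem corollary40:
  fixes V :: "'v set" and A :: "'a set"
    and F :: "('v \<Rightarrow> ('a \<times> 'a) set) \<Rightarrow> 'a set"
  assumes "finite V" and "V \<noteq> {}" and "finite A"
    and "consular_rule V A F"
    and "irreducible V A F" and "weakly_viable V A F"
    and "SPP V A F" and "SPO V A F"
    and "{a, b} \<in> range_edges V A F"
  shows "\<exists>c\<in>A. {a, c} \<in> range_edges V A F \<and> {b, c} \<in> range_edges V A F"
proof (rule ccontr)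
  assume nt: "\<not> ?thesis"
  interpret crule V A F using assms by (unfold_locales) auto
  obtain P0 where P0: "P0 \<in> profiles V A" "F P0 = {a,b}" using assms(9) unfolding range_edges_def by auto
  define Y where "Y = {x\<in>A. {a,x} \<in> F ` profiles V A}"
  define X where "X = A - Y"
  have notri: "\<not> (\<exists>c\<in>A. {a,c} \<in> F ` profiles V A \<and> {b,c} \<in> F ` profiles V A)"
    using nt unfolding range_edges_def .
  note bs = bip_struct[OF assms(6) P0 notri, folded Y_def, folded X_def]
  have bipX: "\<forall>P\<in>profiles V A. \<exists>\<beta> \<gamma>. F P = {\<beta>,\<gamma>} \<and> \<beta> \<in> X \<and> \<gamma> \<in> Y" using bs(1) .
  have bipY: "\<forall>P\<in>profiles V A. \<exists>\<beta> \<gamma>. F P = {\<beta>,\<gamma>} \<and> \<beta> \<in> Y \<and> \<gamma> \<in> X"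
    using bipX by (metis insert_commute)
  have aX: "a \<in> X" and bY: "b \<in> Y" using bs(2,3) .
  have XY: "X \<union> Y = A" "X \<inter> Y = {}" unfolding X_def Y_def by auto
  have YX: "Y \<union> X = A" "Y \<inter> X = {}" using XY by auto
  have nX: "\<forall>P\<in>profiles V A. F P \<inter> X \<noteq> {}" using bipX by blast
  have nY: "\<forall>P\<in>profiles V A. F P \<inter> Y \<noteq> {}" using bipY by blast
  define G where "G = pick V A F X"
  define H where "H = pick V A F Y"
  have GX: "\<And>Q. G Q \<in> X" unfolding G_def using pick[OF aX nX] by blast
  have HY: "\<And>Q. H Q \<in> Y" unfolding H_def using pick[OF bY nY] by blast
  have dec: "F P = {G (restrict_profile P X), H (restrict_profile P Y)}" if P: "P \<in> profiles V A" for P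
  proof -
    obtain \<beta> \<gamma> where bg: "F P = {\<beta>,\<gamma>}" "\<beta> \<in> X" "\<gamma> \<in> Y" using bipX P by blast
    have FX: "F P \<inter> X = {\<beta>}" and FY: "F P \<inter> Y = {\<gamma>}" using bg XY by auto
    obtain P' where P': "P' \<in> profiles V A" "restrict_profile P' X = restrict_profile P X"
      "G (restrict_profile P X) \<in> F P'"
      using pick[OF aX nX, of "restrict_profile P X"] P unfolding G_def by blast
    have "F P \<inter> X = F P' \<inter> X" by (rule indep[OF XY bipX P'(1) P P'(2)])
    then have g: "G (restrict_profile P X) = \<beta>" using P'(3) GX FX by blast
    obtain P'' where P'': "P'' \<in> profiles V A" "restrict_profile P'' Y = restrict_profile P Y"
      "H (restrict_profile P Y) \<in> F P''"
      using pick[OF bY nY, of "restrict_profile P Y"] P unfolding H_def by blast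
    have "F P \<inter> Y = F P'' \<inter> Y" by (rule indep[OF YX bipY P''(1) P P''(2)])
    then have h: "H (restrict_profile P Y) = \<gamma>" using P''(3) HY FY by blast
    show ?thesis using g h bg by simp
  qed
  have "reducible V A F" unfolding reducible_def
    apply (rule exI[of _ X], rule exI[of _ Y], rule exI[of _ G], rule exI[of _ H])
    using XY GX HY dec by blast
  then show False using assms(5) unfolding irreducible_def by blast
qed

end
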